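(* Let $\epsilon=\epsilon_1\cdots\epsilon_n$ be an inversion sequence, and let $\epsilon'$ be the sequence obtained by applying Algorithm A (described below) to $\epsilon$. Then $\epsilon'$ is also an inversion sequence.
   Context: An inversion sequence of length $n$ is an integer sequence $\epsilon_1\cdots\epsilon_n$ with $0\le\epsilon_i<i$ for all $i$. The reduction of an integer word replaces each occurrence of its $k$-th smallest distinct value by $k-1$; a consecutive pattern $\underline{p_1p_2p_3p_4}$ occurs in a sequence at position $i$ if the reduction of its entries in positions $i,i+1,i+2,i+3$ equals $p_1p_2p_3p_4$. Let $p=\underline{0102}$ and $q=\underline{0112}$. Algorithm A, on input an integer sequence $\mathrm{seq}=\epsilon_1\cdots\epsilon_n$: let $E_p$, $E_q$ be the sets of positions of occurrences of $p$, resp. $q$, in the input sequence; set $\mathrm{last}:=$ null. For $i=1,2,\dots,n$ in order: let $N_p,N_q$ be the sets of positions of occurrences of $p$, resp. $q$, in the current sequence. If $i-2\in E_p$: set $\mathrm{last}:=\mathrm{seq}[i]$ and $\mathrm{seq}[i]:=\mathrm{seq}[i-1]$. Else if $i-2\in E_q$: set $\mathrm{last}:=\mathrm{seq}[i]$ and $\mathrm{seq}[i]:=\mathrm{seq}[i-2]$. Else if $i-2\in N_p$ or $i-2\in N_q$: swap the values of $\mathrm{seq}[i]$ and $\mathrm{last}$. Output $\mathrm{seq}$. *)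

theory Defs
  imports Main
begin

(* Sequences are int lists; the paper's 1-based entry seq[i] is the list entry  s ! (i - 1). *)

definition inv_seq :: "int list \<Rightarrow> bool" where
  "inv_seq e \<longleftrightarrow> (\<forall>i < length e. 0 \<le> e ! i \<and> e ! i < int (i + 1))"

(* reduction: k-th smallest distinct value is replaced by k-1 *)
definition reduction :: "int list \<Rightarrow> nat list" where
  "reduction xs = map (\<lambda>x. card {y \<in> set xs. y < x}) xs"

definition occurs_at :: "nat list \<Rightarrow> int list \<Rightarrow> nat \<Rightarrow> bool" where
  "occurs_at pat s pos \<longleftrightarrow> 1 \<le> pos \<and> pos + 3 \<le> length s \<and>
     reduction [s ! (pos - 1), s ! pos, s ! (pos + 1), s ! (pos + 2)] = pat"

definition occ :: "nat list \<Rightarrow> int list \<Rightarrow> nat set" where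
  "occ pat s = {pos. occurs_at pat s pos}"

definition pat_p :: "nat list" where "pat_p = [0,1,0,2]"
definition pat_q :: "nat list" where "pat_q = [0,1,1,2]"

(* State: (current sequence, last),
   last = None encodes null.  Result None signals that a swap with a null 'last'
   was attempted (the output would then not be an integer sequence). *)
definition algA_step :: "nat set \<Rightarrow> nat set \<Rightarrow> nat \<Rightarrow> int list \<times> int option
    \<Rightarrow> (int list \<times> int option) option" where
  "algA_step Ep Eq i st = (case st of (s, l) \<Rightarrow>
     (if 3 \<le> i \<and> i - 2 \<in> Ep then Some (s[i - 1 := s ! (i - 2)], Some (s ! (i - 1)))
      else if 3 \<le> i \<and> i - 2 \<in> Eq then Some (s[i - 1 := s ! (i - 3)], Some (s ! (i - 1)))
      else if 3 \<le> i \<and> (i - 2 \<in> occ pat_p s \<or> i - 2 \<in> occ pat_q s) then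
        (case l of None \<Rightarrow> None | Some v \<Rightarrow> Some (s[i - 1 := v], Some (s ! (i - 1))))
      else Some (s, l)))"

definition algA :: "int list \<Rightarrow> int list option" where
  "algA s = map_option fst
     (foldl (\<lambda>acc i. Option.bind acc (algA_step (occ pat_p s) (occ pat_q s) i))
        (Some (s, None)) [1..<length s + 1])"

end

theory Submission
  imports Defs
begin

lemma inv_upd:
  assumes "inv_seq s" "0 \<le> x" "x < int (j+1)"
  shows "inv_seq (s[j := x])"
  using assms unfolding inv_seq_def
  by (metis length_list_update nth_list_update_eq nth_list_update_neq)

lemma inv_nth:
  assumes "inv_seq s" "j < length s"
  shows "0 \<le> s ! j \<and> s ! j < int (j+1)"
  using assms unfolding inv_seq_def by auto

definition P :: "int list \<Rightarrow> nat \<Rightarrow> int list \<Rightarrow> int option \<Rightarrow> bool" where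
  "P e k s l \<longleftrightarrow> length s = length e \<and> inv_seq s \<and> (l = None \<longrightarrow> s = e) \<and>
     (\<forall>v. l = Some v \<longrightarrow> 0 \<le> v \<and> v < int k + 1)"

lemma step:
  assumes "P e k s l" "Suc k \<le> length e"
  shows "\<exists>s' l'. algA_step (occ pat_p e) (occ pat_q e) (Suc k) (s, l) = Some (s', l')
           \<and> P e (Suc k) s' l'"
proof -
  have L: "length s = length e" and I: "inv_seq s" and N: "l = None \<longrightarrow> s = e"
    and S: "\<And>v. l = Some v \<Longrightarrow> 0 \<le> v \<and> v < int k + 1"
    using assms(1) unfolding P_def by auto
  have k: "k < length s" using L assms(2) by simp
  have sk: "0 \<le> s ! k \<and> s ! k < int (k+1)" using inv_nth[OF I k] .
  show ?thesis
  proof (cases "3 \<le> Suc k \<and> Suc k - 2 \<in> occ pat_p e")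
    case True
    have a: "0 \<le> s ! (k - 1) \<and> s ! (k - 1) < int (k - 1 + 1)" using inv_nth[OF I, of "k-1"] k True by auto
    show ?thesis using True a sk k L I
      by (auto simp: algA_step_def P_def intro!: inv_upd)
  next
    case F1: False
    show ?thesis
    proof (cases "3 \<le> Suc k \<and> Suc k - 2 \<in> occ pat_q e")
      case True
      have a: "0 \<le> s ! (k - 2) \<and> s ! (k - 2) < int (k - 2 + 1)" using inv_nth[OF I, of "k-2"] k True by auto
      show ?thesis using F1 True a sk k L I
        by (auto simp: algA_step_def P_def intro!: inv_upd)
    next
      case F2: False
      show ?thesis
      proof (cases l)
        case None
        then have "s = e" using N by simp
        then show ?thesis using F1 F2 None assms(1)
          by (auto simp: algA_step_def P_def)
      next
        case (Some v)
        have v: "0 \<le> v \<and> v < int k + 1" using S Some by simp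
        show ?thesis using F1 F2 Some v sk k L I
          by (auto simp: algA_step_def P_def intro!: inv_upd)
      qed
    qed
  qed
qed

lemma main:
  assumes "inv_seq e" "k \<le> length e"
  shows "\<exists>s l. foldl (\<lambda>acc i. Option.bind acc (algA_step (occ pat_p e) (occ pat_q e) i))
        (Some (e, None)) [1..<k + 1] = Some (s, l) \<and> P e k s l"
  using assms(2)
proof (induction k)
  case 0
  then show ?case using assms(1) by (simp add: P_def)
next
  case (Suc k)
  then obtain s l where h: "foldl (\<lambda>acc i. Option.bind acc (algA_step (occ pat_p e) (occ pat_q e) i))
        (Some (e, None)) [1..<k + 1] = Some (s, l)" "P e k s l" by auto
  obtain s' l' where h2: "algA_step (occ pat_p e) (occ pat_q e) (Suc k) (s, l) = Some (s', l')"
      "P e (Suc k) s' l'" using step[OF h(2)] Suc.prems by blast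
  have "[1..<Suc k + 1] = [1..<k+1] @ [Suc k]" by simp
  then show ?case using h h2 by simp
qed

theorem proposition1:
  fixes e :: "int list"
  assumes "inv_seq e"
  shows "\<exists>e'. algA e = Some e' \<and> inv_seq e'"
proof -
  obtain s l where "foldl (\<lambda>acc i. Option.bind acc (algA_step (occ pat_p e) (occ pat_q e) i))
        (Some (e, None)) [1..<length e + 1] = Some (s, l)" "P e (length e) s l"
    using main[OF assms le_refl] by blast
  then show ?thesis unfolding algA_def P_def by auto
qed

end
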